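(* Let $L$ be a polyhedron and $G$ a simplicial group. Then for every $V\in\mathbb Z[G(L)]$ we have $\theta(V)\le\eta(V)$.
   Context: A polyhedron $L$ is a finite simplicial complex of affine simplices in $\mathbb R^\infty$ with a linear order on the vertices of each simplex, compatible with faces; $\hat L$ is the simplicial set obtained by adding degenerate simplices. For a simplicial set $E$, $E(L)$ is the set of simplicial maps $\hat L\to E$; for $y\in L$, $\bar{\bar y}$ is the subpolyhedron of $y$ and its faces. For $T\subset L$ put $E_T=\prod_{y\in T}E(\bar{\bar y})$ and $v\|_T=(v|_{\bar{\bar y}})_{y\in T}$, extended additively to $\mathbb Z[E(L)]\to\mathbb Z[E_T]$ (free abelian groups on these sets). For $V\in\mathbb Z[E(L)]$, $\theta(V)=\inf\{\#T: T\subset L,\ V\|_T\neq0\}\in\mathbb N\cup\{\infty\}$. For a simplicial group $G$, $G(L)$ and $G_L=\prod_{y\in L}G(\bar{\bar y})$ are groups, $\mathbb Z H$ denotes a group ring with augmentation ideal $\Delta(H)$ ($\Delta(H)^0=\mathbb ZH$), and $\eta(V)=\sup\{s\in\mathbb N: V\|_L\in\Delta(G_L)^s\}$. *)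

theory Defs
  imports "HOL-Algebra.Group" "HOL-Library.Sublist" "HOL-Library.Extended_Nat"
begin

text \<open>A simplex is the list of its vertices in the given linear order.\<close>

definition polyhedron :: "'v list set \<Rightarrow> bool" where
  "polyhedron L \<longleftrightarrow> finite L
     \<and> (\<forall>y\<in>L. y \<noteq> [] \<and> distinct y)
     \<and> (\<forall>y\<in>L. \<forall>z. z \<noteq> [] \<and> subseq z y \<longrightarrow> z \<in> L)
     \<and> (\<forall>y\<in>L. \<forall>z\<in>L. set y = set z \<longrightarrow> y = z)"

definition faces :: "'v list set \<Rightarrow> 'v list \<Rightarrow> 'v list set" where
  "faces L y = {z \<in> L. subseq z y}"

text \<open>n-simplices of the simplicial set Lhat: weakly increasing sequences of
  length n+1 of vertices of one simplex (degenerate simplices included).\<close>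
definition Lhat :: "'v list set \<Rightarrow> nat \<Rightarrow> 'v list set" where
  "Lhat L n = {w. length w = Suc n \<and> remdups_adj w \<in> L}"

definition del_at :: "nat \<Rightarrow> 'v list \<Rightarrow> 'v list" where
  "del_at i w = take i w @ drop (Suc i) w"

definition dup_at :: "nat \<Rightarrow> 'v list \<Rightarrow> 'v list" where
  "dup_at i w = take (Suc i) w @ drop i w"

text \<open>X n is the set of n-simplices, d n i : X (n+1) \<rightarrow> X n (i \<le> n+1) are the
  face maps, s n i : X n \<rightarrow> X (n+1) (i \<le> n) the degeneracies.\<close>
definition simplicial_set ::
  "(nat \<Rightarrow> 'a set) \<Rightarrow> (nat \<Rightarrow> nat \<Rightarrow> 'a \<Rightarrow> 'a) \<Rightarrow> (nat \<Rightarrow> nat \<Rightarrow> 'a \<Rightarrow> 'a) \<Rightarrow> bool" where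
  "simplicial_set X d s \<longleftrightarrow>
     (\<forall>n i x. i \<le> Suc n \<and> x \<in> X (Suc n) \<longrightarrow> d n i x \<in> X n)
   \<and> (\<forall>n i x. i \<le> n \<and> x \<in> X n \<longrightarrow> s n i x \<in> X (Suc n))
   \<and> (\<forall>n i j x. i < j \<and> j \<le> Suc (Suc n) \<and> x \<in> X (Suc (Suc n)) \<longrightarrow>
        d n i (d (Suc n) j x) = d n (j - 1) (d (Suc n) i x))
   \<and> (\<forall>n i j x. i < j \<and> j \<le> Suc n \<and> x \<in> X (Suc n) \<longrightarrow>
        d (Suc n) i (s (Suc n) j x) = s n (j - 1) (d n i x))
   \<and> (\<forall>n j x. j \<le> n \<and> x \<in> X n \<longrightarrow> d n j (s n j x) = x \<and> d n (Suc j) (s n j x) = x)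
   \<and> (\<forall>n i j x. Suc j < i \<and> i \<le> Suc (Suc n) \<and> x \<in> X (Suc n) \<longrightarrow>
        d (Suc n) i (s (Suc n) j x) = s n j (d n (i - 1) x))
   \<and> (\<forall>n i j x. i \<le> j \<and> j \<le> n \<and> x \<in> X n \<longrightarrow>
        s (Suc n) i (s n j x) = s (Suc n) (Suc j) (s n i x))"

definition simplicial_group ::
  "(nat \<Rightarrow> 'g monoid) \<Rightarrow> (nat \<Rightarrow> nat \<Rightarrow> 'g \<Rightarrow> 'g) \<Rightarrow> (nat \<Rightarrow> nat \<Rightarrow> 'g \<Rightarrow> 'g) \<Rightarrow> bool" where
  "simplicial_group G d s \<longleftrightarrow>
     (\<forall>n. group (G n))
   \<and> simplicial_set (\<lambda>n. carrier (G n)) d s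
   \<and> (\<forall>n i. i \<le> Suc n \<longrightarrow> d n i \<in> hom (G (Suc n)) (G n))
   \<and> (\<forall>n i. i \<le> n \<longrightarrow> s n i \<in> hom (G n) (G (Suc n)))"

text \<open>E(L): simplicial maps Lhat \<rightarrow> E (represented extensionally: undefined
  outside the simplices of Lhat).\<close>
definition smaps ::
  "'v list set \<Rightarrow> (nat \<Rightarrow> 'a set) \<Rightarrow> (nat \<Rightarrow> nat \<Rightarrow> 'a \<Rightarrow> 'a) \<Rightarrow> (nat \<Rightarrow> nat \<Rightarrow> 'a \<Rightarrow> 'a)
   \<Rightarrow> (nat \<Rightarrow> 'v list \<Rightarrow> 'a) set" where
  "smaps L X d s = {f.
      (\<forall>n w. w \<in> Lhat L n \<longrightarrow> f n w \<in> X n)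
    \<and> (\<forall>n i w. i \<le> Suc n \<and> w \<in> Lhat L (Suc n) \<longrightarrow> f n (del_at i w) = d n i (f (Suc n) w))
    \<and> (\<forall>n i w. i \<le> n \<and> w \<in> Lhat L n \<longrightarrow> f (Suc n) (dup_at i w) = s n i (f n w))
    \<and> (\<forall>n w. w \<notin> Lhat L n \<longrightarrow> f n w = undefined)}"

definition restr :: "'v list set \<Rightarrow> (nat \<Rightarrow> 'v list \<Rightarrow> 'a) \<Rightarrow> (nat \<Rightarrow> 'v list \<Rightarrow> 'a)" where
  "restr K f = (\<lambda>n w. if w \<in> Lhat K n then f n w else undefined)"

text \<open>E_T = prod over y in T of E(faces y), as extensional functions on T.\<close>
definition prodE ::
  "'v list set \<Rightarrow> (nat \<Rightarrow> 'a set) \<Rightarrow> (nat \<Rightarrow> nat \<Rightarrow> 'a \<Rightarrow> 'a) \<Rightarrow> (nat \<Rightarrow> nat \<Rightarrow> 'a \<Rightarrow> 'a)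
   \<Rightarrow> 'v list set \<Rightarrow> ('v list \<Rightarrow> nat \<Rightarrow> 'v list \<Rightarrow> 'a) set" where
  "prodE L X d s T = {u. (\<forall>y\<in>T. u y \<in> smaps (faces L y) X d s) \<and> (\<forall>y. y \<notin> T \<longrightarrow> u y = undefined)}"

definition bar :: "'v list set \<Rightarrow> 'v list set \<Rightarrow> (nat \<Rightarrow> 'v list \<Rightarrow> 'a)
                   \<Rightarrow> ('v list \<Rightarrow> nat \<Rightarrow> 'v list \<Rightarrow> 'a)" where
  "bar L T v = (\<lambda>y. if y \<in> T then restr (faces L y) v else undefined)"

text \<open>Elements of Z[X]: finitely supported integer-valued functions supported in X.\<close>
definition supp :: "('a \<Rightarrow> int) \<Rightarrow> 'a set" where
  "supp x = {g. x g \<noteq> 0}"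

definition free_ab :: "'a set \<Rightarrow> ('a \<Rightarrow> int) set" where
  "free_ab X = {x. finite (supp x) \<and> supp x \<subseteq> X}"

definition linext :: "('a \<Rightarrow> 'b) \<Rightarrow> ('a \<Rightarrow> int) \<Rightarrow> ('b \<Rightarrow> int)" where
  "linext phi V = (\<lambda>u. \<Sum>v\<in>{v\<in>supp V. phi v = u}. V v)"

definition gr_mult :: "('g, 'b) monoid_scheme \<Rightarrow> ('g \<Rightarrow> int) \<Rightarrow> ('g \<Rightarrow> int) \<Rightarrow> ('g \<Rightarrow> int)" where
  "gr_mult H x y = (\<lambda>g. \<Sum>h\<in>supp x. \<Sum>k\<in>supp y. if h \<otimes>\<^bsub>H\<^esub> k = g then x h * y k else 0)"

definition aug :: "('g, 'b) monoid_scheme \<Rightarrow> ('g \<Rightarrow> int) set" where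
  "aug H = {x \<in> free_ab (carrier H). (\<Sum>g\<in>supp x. x g) = 0}"

inductive_set zspan :: "('g \<Rightarrow> int) set \<Rightarrow> ('g \<Rightarrow> int) set" for S where
  zero: "(\<lambda>_. 0) \<in> zspan S"
| gen: "a \<in> S \<Longrightarrow> a \<in> zspan S"
| add: "a \<in> zspan S \<Longrightarrow> b \<in> zspan S \<Longrightarrow> (\<lambda>g. a g + b g) \<in> zspan S"
| neg: "a \<in> zspan S \<Longrightarrow> (\<lambda>g. - a g) \<in> zspan S"

fun aug_pow :: "('g, 'b) monoid_scheme \<Rightarrow> nat \<Rightarrow> ('g \<Rightarrow> int) set" where
  "aug_pow H 0 = free_ab (carrier H)"
| "aug_pow H (Suc n) = zspan {gr_mult H a b | a b. a \<in> aug_pow H n \<and> b \<in> aug H}"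

definition GL :: "'v list set \<Rightarrow> (nat \<Rightarrow> 'g monoid) \<Rightarrow> (nat \<Rightarrow> nat \<Rightarrow> 'g \<Rightarrow> 'g)
                  \<Rightarrow> (nat \<Rightarrow> nat \<Rightarrow> 'g \<Rightarrow> 'g) \<Rightarrow> ('v list \<Rightarrow> nat \<Rightarrow> 'v list \<Rightarrow> 'g) monoid" where
  "GL L G d s = \<lparr> carrier = prodE L (\<lambda>n. carrier (G n)) d s L,
     mult = (\<lambda>a b. \<lambda>y. if y \<in> L then (\<lambda>n w. if w \<in> Lhat (faces L y) n
                         then a y n w \<otimes>\<^bsub>G n\<^esub> b y n w else undefined) else undefined),
     one = (\<lambda>y. if y \<in> L then (\<lambda>n w. if w \<in> Lhat (faces L y) n
                         then \<one>\<^bsub>G n\<^esub> else undefined) else undefined) \<rparr>"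

definition theta :: "'v list set \<Rightarrow> ((nat \<Rightarrow> 'v list \<Rightarrow> 'a) \<Rightarrow> int) \<Rightarrow> enat" where
  "theta L V = Inf {enat (card T) | T. T \<subseteq> L \<and> linext (bar L T) V \<noteq> (\<lambda>_. 0)}"

definition eta :: "'v list set \<Rightarrow> (nat \<Rightarrow> 'g monoid) \<Rightarrow> (nat \<Rightarrow> nat \<Rightarrow> 'g \<Rightarrow> 'g)
                   \<Rightarrow> (nat \<Rightarrow> nat \<Rightarrow> 'g \<Rightarrow> 'g) \<Rightarrow> ((nat \<Rightarrow> 'v list \<Rightarrow> 'g) \<Rightarrow> int) \<Rightarrow> enat" where
  "eta L G d s V = Sup (enat ` {k. linext (bar L L) V \<in> aug_pow (GL L G d s) k})"

end

theory Submission
  imports Defs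
begin


definition fs :: "'i set \<Rightarrow> ('i \<Rightarrow> int) \<Rightarrow> ('i \<Rightarrow> 'g) \<Rightarrow> ('g \<Rightarrow> int)" where
  "fs I c p = (\<lambda>g. \<Sum>i\<in>I. if p i = g then c i else 0)"

lemma supp_fs: "supp (fs I c p) \<subseteq> p ` I"
proof
  fix g assume "g \<in> supp (fs I c p)"
  then have "(\<Sum>i\<in>I. if p i = g then c i else 0) \<noteq> 0" by (simp add: supp_def fs_def)
  then obtain i where "i \<in> I" "(if p i = g then c i else 0) \<noteq> 0"
    by (rule sum.not_neutral_contains_not_neutral)
  then show "g \<in> p ` I" by (auto split: if_splits)
qed

lemma fs_free_ab: "finite I \<Longrightarrow> p ` I \<subseteq> C \<Longrightarrow> fs I c p \<in> free_ab C"
  unfolding free_ab_def using supp_fs[of I c p] by (auto intro: finite_subset)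

lemma fs_sum_coeff:
  assumes "finite I" shows "(\<Sum>g\<in>supp (fs I c p). fs I c p g) = (\<Sum>i\<in>I. c i)"
proof -
  have "(\<Sum>g\<in>supp (fs I c p). fs I c p g) = (\<Sum>g\<in>p ` I. fs I c p g)"
    by (rule sum.mono_neutral_left) (use assms supp_fs[of I c p] in \<open>auto simp: supp_def\<close>)
  also have "\<dots> = (\<Sum>g\<in>p ` I. \<Sum>i\<in>I. if p i = g then c i else 0)" by (simp add: fs_def)
  also have "\<dots> = (\<Sum>i\<in>I. \<Sum>g\<in>p ` I. if p i = g then c i else 0)" by (rule sum.swap)
  also have "\<dots> = (\<Sum>i\<in>I. c i)"
    using assms by (auto intro!: sum.cong simp: sum.delta)
  finally show ?thesis .
qed

lemma gr_mult_ext: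
  assumes "finite P" "supp x \<subseteq> P" "finite Q" "supp y \<subseteq> Q"
  shows "gr_mult H x y g = (\<Sum>h\<in>P. \<Sum>k\<in>Q. if h \<otimes>\<^bsub>H\<^esub> k = g then x h * y k else 0)"
proof -
  have "gr_mult H x y g = (\<Sum>h\<in>supp x. \<Sum>k\<in>Q. if h \<otimes>\<^bsub>H\<^esub> k = g then x h * y k else 0)"
    unfolding gr_mult_def
    by (rule sum.cong[OF refl], rule sum.mono_neutral_left) (use assms in \<open>auto simp: supp_def\<close>)
  also have "\<dots> = (\<Sum>h\<in>P. \<Sum>k\<in>Q. if h \<otimes>\<^bsub>H\<^esub> k = g then x h * y k else 0)"
  proof (rule sum.mono_neutral_left)
    show "\<forall>i\<in>P - supp x. (\<Sum>k\<in>Q. if i \<otimes>\<^bsub>H\<^esub> k = g then x i * y k else 0) = 0"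
    proof
      fix i assume "i \<in> P - supp x"
      then have "x i = 0" by (simp add: supp_def)
      then show "(\<Sum>k\<in>Q. if i \<otimes>\<^bsub>H\<^esub> k = g then x i * y k else 0) = 0"
        by (intro sum.neutral) simp
    qed
  qed (use assms in auto)
  finally show ?thesis .
qed

lemma sum_swap4: "(\<Sum>h\<in>A. \<Sum>k\<in>B. \<Sum>i\<in>C. \<Sum>j\<in>D. f h k i j) = (\<Sum>i\<in>C. \<Sum>j\<in>D. \<Sum>h\<in>A. \<Sum>k\<in>B. f h k i j)"
proof -
  have "(\<Sum>h\<in>A. \<Sum>k\<in>B. \<Sum>i\<in>C. \<Sum>j\<in>D. f h k i j) = (\<Sum>h\<in>A. \<Sum>i\<in>C. \<Sum>k\<in>B. \<Sum>j\<in>D. f h k i j)"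
    by (rule sum.cong[OF refl], rule sum.swap)
  also have "\<dots> = (\<Sum>h\<in>A. \<Sum>i\<in>C. \<Sum>j\<in>D. \<Sum>k\<in>B. f h k i j)"
    by (intro sum.cong refl, rule sum.swap)
  also have "\<dots> = (\<Sum>i\<in>C. \<Sum>h\<in>A. \<Sum>j\<in>D. \<Sum>k\<in>B. f h k i j)"
    by (rule sum.swap)
  also have "\<dots> = (\<Sum>i\<in>C. \<Sum>j\<in>D. \<Sum>h\<in>A. \<Sum>k\<in>B. f h k i j)"
    by (intro sum.cong refl, rule sum.swap)
  finally show ?thesis .
qed

lemma gr_mult_fs:
  assumes I: "finite I" and J: "finite J"
  shows "gr_mult H (fs I a p) (fs J b q) =
         fs (I \<times> J) (\<lambda>(i,j). a i * b j) (\<lambda>(i,j). p i \<otimes>\<^bsub>H\<^esub> q j)"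
proof
  fix g
  have "gr_mult H (fs I a p) (fs J b q) g =
     (\<Sum>h\<in>p`I. \<Sum>k\<in>q`J. if h \<otimes>\<^bsub>H\<^esub> k = g then fs I a p h * fs J b q k else 0)"
    by (rule gr_mult_ext) (use assms supp_fs[of I a p] supp_fs[of J b q] in auto)
  also have "\<dots> = (\<Sum>h\<in>p`I. \<Sum>k\<in>q`J. \<Sum>i\<in>I. \<Sum>j\<in>J.
       (if h \<otimes>\<^bsub>H\<^esub> k = g then 1 else 0) * ((if p i = h then a i else 0) * (if q j = k then b j else 0)))"
  proof (intro sum.cong refl)
    fix h k
    have "(if h \<otimes>\<^bsub>H\<^esub> k = g then fs I a p h * fs J b q k else 0)
       = (if h \<otimes>\<^bsub>H\<^esub> k = g then 1 else 0) * (fs I a p h * fs J b q k)" by simp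
    also have "\<dots> = (if h \<otimes>\<^bsub>H\<^esub> k = g then 1 else 0) * (\<Sum>i\<in>I. \<Sum>j\<in>J. (if p i = h then a i else 0) * (if q j = k then b j else 0))"
      unfolding fs_def sum_product ..
    also have "\<dots> = (\<Sum>i\<in>I. \<Sum>j\<in>J. (if h \<otimes>\<^bsub>H\<^esub> k = g then 1 else 0) * ((if p i = h then a i else 0) * (if q j = k then b j else 0)))"
      by (simp add: sum_distrib_left)
    finally show "(if h \<otimes>\<^bsub>H\<^esub> k = g then fs I a p h * fs J b q k else 0) = \<dots>" .
  qed
  also have "\<dots> = (\<Sum>i\<in>I. \<Sum>j\<in>J. \<Sum>h\<in>p`I. \<Sum>k\<in>q`J.
       (if h \<otimes>\<^bsub>H\<^esub> k = g then 1 else 0) * ((if p i = h then a i else 0) * (if q j = k then b j else 0)))"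
    by (rule sum_swap4)
  also have "\<dots> = (\<Sum>i\<in>I. \<Sum>j\<in>J. if p i \<otimes>\<^bsub>H\<^esub> q j = g then a i * b j else 0)"
  proof (intro sum.cong refl)
    fix i j assume ij: "i \<in> I" "j \<in> J"
    have "(\<Sum>h\<in>p`I. \<Sum>k\<in>q`J. (if h \<otimes>\<^bsub>H\<^esub> k = g then 1 else 0) * ((if p i = h then a i else 0) * (if q j = k then b j else 0)))
       = (\<Sum>h\<in>p`I. if p i = h then (\<Sum>k\<in>q`J. if q j = k then (if h \<otimes>\<^bsub>H\<^esub> k = g then a i * b j else 0) else 0) else 0)"
    proof (rule sum.cong[OF refl])
      fix h assume "h \<in> p`I"
      show "(\<Sum>k\<in>q`J. (if h \<otimes>\<^bsub>H\<^esub> k = g then 1 else 0) * ((if p i = h then a i else 0) * (if q j = k then b j else 0)))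
        = (if p i = h then (\<Sum>k\<in>q`J. if q j = k then (if h \<otimes>\<^bsub>H\<^esub> k = g then a i * b j else 0) else 0) else 0)"
      proof (cases "p i = h")
        case True show ?thesis unfolding if_P[OF True] by (rule sum.cong) (use True in auto)
      next
        case False then show ?thesis by simp
      qed
    qed
    also have "\<dots> = (if p i \<otimes>\<^bsub>H\<^esub> q j = g then a i * b j else 0)"
      using ij assms by (simp add: sum.delta)
    finally show "(\<Sum>h\<in>p`I. \<Sum>k\<in>q`J. (if h \<otimes>\<^bsub>H\<^esub> k = g then 1 else 0) * ((if p i = h then a i else 0) * (if q j = k then b j else 0)))
       = (if p i \<otimes>\<^bsub>H\<^esub> q j = g then a i * b j else 0)" .
  qed
  also have "\<dots> = fs (I \<times> J) (\<lambda>(i,j). a i * b j) (\<lambda>(i,j). p i \<otimes>\<^bsub>H\<^esub> q j) g"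
    unfolding fs_def sum.cartesian_product by (rule sum.cong) (auto simp: split_def)
  finally show "gr_mult H (fs I a p) (fs J b q) g =
         fs (I \<times> J) (\<lambda>(i,j). a i * b j) (\<lambda>(i,j). p i \<otimes>\<^bsub>H\<^esub> q j) g" .
qed

lemma fs_reindex:
  assumes "bij_betw \<phi> I J" "\<And>i. i \<in> I \<Longrightarrow> c' (\<phi> i) = c i" "\<And>i. i \<in> I \<Longrightarrow> p' (\<phi> i) = p i"
  shows "fs I c p = fs J c' p'"
proof
  fix g
  have "fs J c' p' g = (\<Sum>i\<in>I. if p' (\<phi> i) = g then c' (\<phi> i) else 0)"
    unfolding fs_def using sum.reindex_bij_betw[OF assms(1), symmetric] by simp
  also have "\<dots> = fs I c p g" unfolding fs_def using assms by (auto intro: sum.cong)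
  finally show "fs I c p g = fs J c' p' g" by simp
qed

lemma linext_fs: "finite (supp V) \<Longrightarrow> linext phi V = fs (supp V) V phi"
  unfolding linext_def fs_def
  by (intro ext, simp add: sum.inter_filter)




lemma aug_pow_zero: "(\<lambda>_. 0) \<in> aug_pow H k"
  by (cases k) (auto simp: free_ab_def supp_def intro: zspan.zero)

lemma aug_pow_add: "a \<in> aug_pow H k \<Longrightarrow> b \<in> aug_pow H k \<Longrightarrow> (\<lambda>g. a g + b g) \<in> aug_pow H k"
proof (cases k)
  case 0
  assume "a \<in> aug_pow H k" "b \<in> aug_pow H k"
  have "supp (\<lambda>g. a g + b g) \<subseteq> supp a \<union> supp b" by (auto simp: supp_def)
  then show ?thesis using 0 \<open>a \<in> aug_pow H k\<close> \<open>b \<in> aug_pow H k\<close>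
    by (auto simp: free_ab_def intro: finite_subset)
next
  case (Suc m) then show "a \<in> aug_pow H k \<Longrightarrow> b \<in> aug_pow H k \<Longrightarrow> ?thesis"
    by (auto intro: zspan.add)
qed

lemma aug_pow_neg: "a \<in> aug_pow H k \<Longrightarrow> (\<lambda>g. - a g) \<in> aug_pow H k"
  by (cases k) (auto simp: free_ab_def supp_def intro: zspan.neg)

lemma aug_pow_nmult: "a \<in> aug_pow H k \<Longrightarrow> (\<lambda>g. int n * a g) \<in> aug_pow H k"
proof (induction n)
  case 0 then show ?case using aug_pow_zero by simp
next
  case (Suc n)
  then have "(\<lambda>g. a g + int n * a g) \<in> aug_pow H k" by (intro aug_pow_add)
  then show ?case by (simp add: algebra_simps)
qed

lemma aug_pow_smult: "a \<in> aug_pow H k \<Longrightarrow> (\<lambda>g. c * a g) \<in> aug_pow H k"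
proof (cases c rule: int_cases)
  case (nonneg n) then show "a \<in> aug_pow H k \<Longrightarrow> ?thesis" using aug_pow_nmult by simp
next
  case (neg n)
  assume a: "a \<in> aug_pow H k"
  have "(\<lambda>g. - (int (Suc n) * a g)) \<in> aug_pow H k"
    by (rule aug_pow_neg[OF aug_pow_nmult[OF a]])
  moreover have "(\<lambda>g. c * a g) = (\<lambda>g. - (int (Suc n) * a g))"
  proof -
    have "c = - int (Suc n)" using neg by simp
    then show ?thesis by (simp only: mult_minus_left)
  qed
  ultimately show ?thesis by simp
qed

lemma aug_pow_sum:
  assumes "finite A" "\<And>x. x \<in> A \<Longrightarrow> f x \<in> aug_pow H k"
  shows "(\<lambda>g. \<Sum>x\<in>A. c x * f x g) \<in> aug_pow H k"
  using assms
proof (induction A rule: finite_induct)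
  case empty then show ?case using aug_pow_zero by simp
next
  case (insert x F)
  have "(\<lambda>g. c x * f x g + (\<Sum>y\<in>F. c y * f y g)) \<in> aug_pow H k"
    using insert by (intro aug_pow_add aug_pow_smult) auto
  then show ?case using insert by simp
qed




lemma subseq_dropWhile: "subseq xs ys \<Longrightarrow> subseq (dropWhile P xs) (dropWhile P ys)"
proof (induction rule: list_emb.induct)
  case (list_emb_Nil ys) then show ?case by simp
next
  case (list_emb_Cons xs ys y)
  show ?case
  proof (cases "P y")
    case True then show ?thesis using list_emb_Cons by simp
  next
    case False
    have "subseq (dropWhile P ys) ys" by (rule suffix_imp_subseq[OF suffix_dropWhile])
    then have "subseq (dropWhile P ys) (y#ys)" by auto
    then show ?thesis using False list_emb_Cons list_emb_trans by fastforce
  qed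
next
  case (list_emb_Cons2 x y xs ys)
  then show ?case by auto
qed

lemma subseq_remdups_adj: "subseq xs ys \<Longrightarrow> subseq (remdups_adj xs) (remdups_adj ys)"
proof (induction ys arbitrary: xs rule: length_induct)
  case (1 ys)
  show ?case
  proof (cases ys)
    case Nil then show ?thesis using 1 by (auto dest: list_emb_Nil2)
  next
    case (Cons y ys')
    show ?thesis
    proof (cases xs)
      case Nil then show ?thesis by simp
    next
      case (Cons x xs')
      have r: "subseq (remdups_adj ys') (remdups_adj (y#ys'))"
        by (cases ys') (auto simp: remdups_adj_Cons split: list.split)
      show ?thesis
      proof (cases "x = y \<and> subseq xs' ys'")
        case True
        have "subseq (dropWhile (\<lambda>z. z = x) xs') (dropWhile (\<lambda>z. z = x) ys')"
          using True subseq_dropWhile by blast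
        moreover have "length (dropWhile (\<lambda>z. z = x) ys') < length ys"
          using \<open>ys = y#ys'\<close> by (simp add: le_imp_less_Suc length_dropWhile_le)
        ultimately have "subseq (remdups_adj (dropWhile (\<lambda>z. z = x) xs')) (remdups_adj (dropWhile (\<lambda>z. z = x) ys'))"
          using 1 by blast
        then show ?thesis using True \<open>ys = y#ys'\<close> Cons by (simp add: remdups_adj_Cons')
      next
        case False
        then have "subseq xs ys'" using 1(2) Cons \<open>ys = y#ys'\<close> by auto
        then have "subseq (remdups_adj xs) (remdups_adj ys')" using 1 \<open>ys = y#ys'\<close> by auto
        then show ?thesis using r \<open>ys = y#ys'\<close> list_emb_trans by fastforce
      qed
    qed
  qed
qed

lemma remdups_adj_dup: "i < length w \<Longrightarrow> remdups_adj (dup_at i w) = remdups_adj w"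
proof -
  assume i: "i < length w"
  have w: "w = take i w @ w ! i # drop (Suc i) w" using i by (simp add: id_take_nth_drop)
  have "dup_at i w = take i w @ w ! i # w ! i # drop (Suc i) w"
    unfolding dup_at_def using i by (simp add: take_Suc_conv_app_nth Cons_nth_drop_Suc)
  moreover have "remdups_adj (take i w @ w ! i # w ! i # drop (Suc i) w) = remdups_adj (take i w @ w ! i # drop (Suc i) w)"
    by (subst (1 2) remdups_adj_append) simp
  ultimately show ?thesis using w by simp
qed

lemma subseq_del_at: "subseq (del_at i w) w"
proof -
  have "subseq (drop 1 (drop i w)) (drop i w)" by (rule suffix_imp_subseq[OF suffix_drop])
  then have "subseq (drop (Suc i) w) (drop i w)" by simp
  then have "subseq (take i w @ drop (Suc i) w) (take i w @ drop i w)"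
    by (rule list_emb_append_mono[OF subseq_order.order_refl])
  then show ?thesis unfolding del_at_def by simp
qed

locale sctx =
  fixes L :: "'v list set" and G :: "nat \<Rightarrow> 'g monoid" and d s :: "nat \<Rightarrow> nat \<Rightarrow> 'g \<Rightarrow> 'g"
  assumes poly: "polyhedron L" and sg: "simplicial_group G d s"
begin

abbreviation "H \<equiv> GL L G d s"
abbreviation "X \<equiv> \<lambda>n. carrier (G n)"

definition emb :: "'v list set \<Rightarrow> ('v list \<Rightarrow> nat \<Rightarrow> 'v list \<Rightarrow> 'g) \<Rightarrow> ('v list \<Rightarrow> nat \<Rightarrow> 'v list \<Rightarrow> 'g)" where
  "emb T u = (\<lambda>y. if y \<in> T then u y else \<one>\<^bsub>H\<^esub> y)"

lemma grp: "group (G n)" using sg unfolding simplicial_group_def by auto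

lemma d_one: "i \<le> Suc n \<Longrightarrow> d n i \<one>\<^bsub>G (Suc n)\<^esub> = \<one>\<^bsub>G n\<^esub>"
  using sg grp unfolding simplicial_group_def by (auto intro: hom_one)

lemma s_one: "i \<le> n \<Longrightarrow> s n i \<one>\<^bsub>G n\<^esub> = \<one>\<^bsub>G (Suc n)\<^esub>"
  using sg grp unfolding simplicial_group_def by (auto intro: hom_one)

lemma fin: "finite L" using poly unfolding polyhedron_def by auto

lemma faces_sub: "faces L y \<subseteq> L" unfolding faces_def by auto

lemma faces_closed: "z \<in> faces L y \<Longrightarrow> z' \<noteq> [] \<Longrightarrow> subseq z' z \<Longrightarrow> z' \<in> faces L y"
  using poly unfolding faces_def polyhedron_def by (auto intro: list_emb_trans)

lemma Lhat_mono: "w \<in> Lhat (faces L y) n \<Longrightarrow> w \<in> Lhat L n"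
  unfolding Lhat_def using faces_sub by auto

lemma Lhat_del: "w \<in> Lhat (faces L y) (Suc n) \<Longrightarrow> i \<le> Suc n \<Longrightarrow> del_at i w \<in> Lhat (faces L y) n"
proof -
  assume w: "w \<in> Lhat (faces L y) (Suc n)" and i: "i \<le> Suc n"
  have len: "length (del_at i w) = Suc n" using w i unfolding Lhat_def del_at_def by auto
  have "subseq (remdups_adj (del_at i w)) (remdups_adj w)"
    by (rule subseq_remdups_adj[OF subseq_del_at])
  moreover have "remdups_adj (del_at i w) \<noteq> []" using len by auto
  ultimately show ?thesis using w len faces_closed unfolding Lhat_def by auto
qed

lemma Lhat_dup: "w \<in> Lhat K n \<Longrightarrow> i \<le> n \<Longrightarrow> dup_at i w \<in> Lhat K (Suc n)"
  unfolding Lhat_def using remdups_adj_dup[of i w] by (auto simp: dup_at_def)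

lemma smaps_in: "f \<in> smaps K X d s \<Longrightarrow> w \<in> Lhat K n \<Longrightarrow> f n w \<in> carrier (G n)"
  unfolding smaps_def by auto

lemma smaps_out: "f \<in> smaps K X d s \<Longrightarrow> w \<notin> Lhat K n \<Longrightarrow> f n w = undefined"
  unfolding smaps_def by auto

lemma one_H: "\<one>\<^bsub>H\<^esub> = (\<lambda>y. if y \<in> L then (\<lambda>n w. if w \<in> Lhat (faces L y) n
                         then \<one>\<^bsub>G n\<^esub> else undefined) else undefined)"
  unfolding GL_def by simp

lemma mult_H: "a \<otimes>\<^bsub>H\<^esub> b = (\<lambda>y. if y \<in> L then (\<lambda>n w. if w \<in> Lhat (faces L y) n
                         then a y n w \<otimes>\<^bsub>G n\<^esub> b y n w else undefined) else undefined)"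
  unfolding GL_def by simp

lemma carrier_H: "carrier H = prodE L X d s L"
  unfolding GL_def by simp

lemma one_smap: "y \<in> L \<Longrightarrow> \<one>\<^bsub>H\<^esub> y \<in> smaps (faces L y) X d s"
  unfolding smaps_def one_H
  by (auto simp: Lhat_del Lhat_dup d_one s_one monoid.one_closed group.is_monoid grp)

lemma restr_smap: "y \<in> L \<Longrightarrow> v \<in> smaps L X d s \<Longrightarrow> restr (faces L y) v \<in> smaps (faces L y) X d s"
  unfolding smaps_def restr_def
  by (auto simp: Lhat_del Lhat_dup Lhat_mono)

lemma bar_carrier: "v \<in> smaps L X d s \<Longrightarrow> bar L L v \<in> carrier H"
  unfolding carrier_H prodE_def bar_def using restr_smap by auto

lemma one_carrier: "\<one>\<^bsub>H\<^esub> \<in> carrier H"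
  unfolding carrier_H prodE_def using one_smap by (auto simp: one_H)

lemma emb_carrier: "h \<in> carrier H \<Longrightarrow> emb T h \<in> carrier H"
  using one_carrier unfolding carrier_H prodE_def emb_def by auto

lemma emb_L: "h \<in> carrier H \<Longrightarrow> emb L h = h"
  unfolding carrier_H prodE_def emb_def one_H by auto

lemma emb_mult_one: "h \<in> carrier H \<Longrightarrow> emb T h \<otimes>\<^bsub>H\<^esub> \<one>\<^bsub>H\<^esub> = emb T h"
proof (rule ext)
  fix y assume h: "h \<in> carrier H"
  show "(emb T h \<otimes>\<^bsub>H\<^esub> \<one>\<^bsub>H\<^esub>) y = emb T h y"
  proof (cases "y \<in> L")
    case True
    then have hy: "h y \<in> smaps (faces L y) X d s" using h unfolding carrier_H prodE_def by auto
    show ?thesis using True hy grp smaps_in[OF hy] smaps_out[OF hy]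
      unfolding mult_H emb_def one_H by (auto intro!: ext simp: group.is_monoid monoid.r_one)
  next
    case False
    then show ?thesis using h unfolding mult_H emb_def one_H carrier_H prodE_def by auto
  qed
qed

lemma emb_mult: "h \<in> carrier H \<Longrightarrow> T \<subseteq> L \<Longrightarrow> y \<in> L \<Longrightarrow> y \<notin> T \<Longrightarrow>
   emb T h \<otimes>\<^bsub>H\<^esub> emb {y} h = emb (insert y T) h"
proof (rule ext)
  fix z assume h: "h \<in> carrier H" and T: "T \<subseteq> L" "y \<in> L" "y \<notin> T"
  show "(emb T h \<otimes>\<^bsub>H\<^esub> emb {y} h) z = emb (insert y T) h z"
  proof (cases "z \<in> L")
    case True
    then have hy: "h z \<in> smaps (faces L z) X d s" using h unfolding carrier_H prodE_def by auto
    show ?thesis using True hy grp smaps_in[OF hy] smaps_out[OF hy] T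
      unfolding mult_H emb_def one_H
      by (auto intro!: ext simp: group.is_monoid monoid.r_one monoid.l_one monoid.one_closed)
  next
    case False
    then show ?thesis using h T unfolding mult_H emb_def one_H carrier_H prodE_def by auto
  qed
qed

end



lemma neg_one_pow_lemma: "k \<le> m \<Longrightarrow> (-1::int)^m * (-1)^(m-k) = (-1)^k"
proof -
  assume "k \<le> m"
  then obtain j where m: "m = k + j" using le_Suc_ex by blast
  have "(-1::int)^m * (-1)^(m-k) = (-1)^k * ((-1)^j * (-1)^j)" unfolding m by (simp add: power_add)
  also have "(-1::int)^j * (-1)^j = 1" by (simp flip: power_add)
  finally show ?thesis by simp
qed

context sctx begin

definition ef :: "'v list set \<Rightarrow> ('v list \<Rightarrow> nat \<Rightarrow> 'v list \<Rightarrow> 'g) \<Rightarrow> (('v list \<Rightarrow> nat \<Rightarrow> 'v list \<Rightarrow> 'g) \<Rightarrow> int)" where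
  "ef S h = fs (Pow S) (\<lambda>T. (-1)^(card S - card T)) (\<lambda>T. emb T h)"

lemma ef_free: "finite S \<Longrightarrow> h \<in> carrier H \<Longrightarrow> ef S h \<in> free_ab (carrier H)"
  unfolding ef_def by (rule fs_free_ab) (use emb_carrier in auto)

definition fac where
  "fac y h = fs (UNIV::bool set) (\<lambda>b. if b then 1 else -1) (\<lambda>b. if b then emb {y} h else \<one>\<^bsub>H\<^esub>)"

lemma fac_aug: "h \<in> carrier H \<Longrightarrow> fac y h \<in> aug H"
proof -
  assume h: "h \<in> carrier H"
  have "fac y h \<in> free_ab (carrier H)" unfolding fac_def
    by (rule fs_free_ab) (use emb_carrier[OF h] one_carrier in auto)
  moreover have "(\<Sum>g\<in>supp (fac y h). fac y h g) = 0"
    unfolding fac_def by (subst fs_sum_coeff) (auto simp: UNIV_bool)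
  ultimately show ?thesis unfolding aug_def by simp
qed

lemma ef_insert:
  assumes S: "finite S" "S \<subseteq> L" and y: "y \<in> L" "y \<notin> S" and h: "h \<in> carrier H"
  shows "ef (insert y S) h = gr_mult H (ef S h) (fac y h)"
proof -
  have "gr_mult H (ef S h) (fac y h) =
     fs (Pow S \<times> UNIV) (\<lambda>(T,b). (-1)^(card S - card T) * (if b then 1 else -1))
        (\<lambda>(T,b). emb T h \<otimes>\<^bsub>H\<^esub> (if b then emb {y} h else \<one>\<^bsub>H\<^esub>))"
    unfolding ef_def fac_def by (rule gr_mult_fs) (use S in auto)
  also have "\<dots> = fs (Pow (insert y S)) (\<lambda>T. (-1)^(card (insert y S) - card T)) (\<lambda>T. emb T h)"
  proof (rule fs_reindex[where \<phi> = "\<lambda>(T,b). if b then insert y T else T"])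
    show "bij_betw (\<lambda>(T,b). if b then insert y T else T) (Pow S \<times> UNIV) (Pow (insert y S))"
      by (rule bij_betw_byWitness[where f' = "\<lambda>U. (U - {y}, y \<in> U)"]) (use y in \<open>auto split: if_splits\<close>)
  next
    fix i assume i: "i \<in> Pow S \<times> (UNIV::bool set)"
    obtain T b where Tb: "i = (T,b)" by fastforce
    have T: "T \<subseteq> S" "finite T" "y \<notin> T" using i Tb S y by (auto intro: finite_subset)
    have cT: "card T \<le> card S" using T S by (simp add: card_mono)
    show "(-1::int)^(card (insert y S) - card ((\<lambda>(T,b). if b then insert y T else T) i)) =
        (\<lambda>(T,b). (-1)^(card S - card T) * (if b then 1 else -1)) i"
      using T S y cT unfolding Tb by (auto simp: Suc_diff_le)
    show "emb ((\<lambda>(T,b). if b then insert y T else T) i) h =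
        (\<lambda>(T,b). emb T h \<otimes>\<^bsub>H\<^esub> (if b then emb {y} h else \<one>\<^bsub>H\<^esub>)) i"
      using T S y h unfolding Tb by (auto simp: emb_mult emb_mult_one)
  qed
  finally show ?thesis unfolding ef_def by simp
qed

lemma ef_aug: "finite S \<Longrightarrow> S \<subseteq> L \<Longrightarrow> h \<in> carrier H \<Longrightarrow> n \<le> card S \<Longrightarrow> ef S h \<in> aug_pow H n"
proof (induction S arbitrary: n rule: finite_induct)
  case empty then show ?case using ef_free by simp
next
  case (insert y F)
  show ?case
  proof (cases n)
    case 0 then show ?thesis using ef_free insert by simp
  next
    case (Suc m)
    then have "m \<le> card F" using insert by simp
    then have "ef F h \<in> aug_pow H m" using insert by simp
    moreover have "fac y h \<in> aug H" using fac_aug insert by simp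
    moreover have "ef (insert y F) h = gr_mult H (ef F h) (fac y h)"
      using insert by (intro ef_insert) auto
    ultimately show ?thesis unfolding Suc by (auto intro: zspan.gen)
  qed
qed

lemma ef_decomp:
  assumes h: "h \<in> carrier H"
  shows "(\<Sum>S\<in>Pow L. ef S h g) = (if h = g then 1 else 0)"
proof -
  let ?f = "\<lambda>T. if emb T h = g then 1 else (0::int)"
  let ?g = "\<lambda>S. (-1)^card S * ef S h g"
  have prem: "?g S = (\<Sum>T\<in>Pow S. (-1)^card T * ?f T)" if "finite S" for S
  proof -
    have "?g S = (\<Sum>T\<in>Pow S. (-1)^card S * (if emb T h = g then (-1)^(card S - card T) else 0))"
      unfolding ef_def fs_def by (simp add: sum_distrib_left)
    also have "\<dots> = (\<Sum>T\<in>Pow S. (-1)^card T * ?f T)"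
    proof (rule sum.cong[OF refl])
      fix T assume "T \<in> Pow S"
      then have "card T \<le> card S" using that by (simp add: card_mono)
      then show "(-1::int)^card S * (if emb T h = g then (-1)^(card S - card T) else 0) = (-1)^card T * ?f T"
        by (simp add: neg_one_pow_lemma)
    qed
    finally show ?thesis .
  qed
  have "?f L = (\<Sum>T\<in>Pow L. (-1)^card T * ?g T)"
    by (rule inclusion_exclusion_symmetric[where g = ?g]) (use prem fin in auto)
  also have "\<dots> = (\<Sum>S\<in>Pow L. ef S h g)"
    by (rule sum.cong[OF refl]) (simp flip: mult.assoc power_add)
  finally show ?thesis using emb_L[OF h] by simp
qed

lemma emb_bar: "T \<subseteq> L \<Longrightarrow> emb T (bar L L v) = emb T (bar L T v)"
  unfolding emb_def bar_def by (auto intro!: ext)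

lemma main:
  assumes V: "V \<in> free_ab (smaps L X d s)"
    and vanish: "\<And>T. T \<subseteq> L \<Longrightarrow> card T < k \<Longrightarrow> linext (bar L T) V = (\<lambda>_. 0)"
  shows "linext (bar L L) V \<in> aug_pow H k"
proof -
  define A where "A = supp V"
  have A: "finite A" "\<And>v. v \<in> A \<Longrightarrow> bar L L v \<in> carrier H"
    using V bar_carrier unfolding A_def free_ab_def by auto
  define FS where "FS S = (\<lambda>g. \<Sum>v\<in>A. V v * ef S (bar L L v) g)" for S
  have x_eq: "linext (bar L L) V = (\<lambda>g. \<Sum>S\<in>Pow L. 1 * FS S g)"
  proof
    fix g
    have "linext (bar L L) V g = (\<Sum>v\<in>A. if bar L L v = g then V v else 0)"
      using A by (simp add: linext_fs A_def fs_def)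
    also have "\<dots> = (\<Sum>v\<in>A. V v * (\<Sum>S\<in>Pow L. ef S (bar L L v) g))"
      by (rule sum.cong[OF refl]) (simp add: ef_decomp A)
    also have "\<dots> = (\<Sum>S\<in>Pow L. 1 * FS S g)"
      unfolding FS_def sum_distrib_left by (simp add: sum.swap[of _ A])
    finally show "linext (bar L L) V g = (\<Sum>S\<in>Pow L. 1 * FS S g)" .
  qed
  have "FS S \<in> aug_pow H k" if S: "S \<in> Pow L" for S
  proof (cases "k \<le> card S")
    case True
    have fS: "finite S" using S fin by (auto intro: finite_subset)
    show ?thesis unfolding FS_def
      by (rule aug_pow_sum) (use A True S fS ef_aug in auto)
  next
    case False
    have "FS S g = 0" for g
    proof -
      have "FS S g = (\<Sum>v\<in>A. \<Sum>T\<in>Pow S. (-1)^(card S - card T) * (V v * (if emb T (bar L L v) = g then 1 else 0)))"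
        unfolding FS_def ef_def fs_def by (auto simp: sum_distrib_left intro!: sum.cong)
      also have "\<dots> = (\<Sum>T\<in>Pow S. (-1)^(card S - card T) * (\<Sum>v\<in>A. V v * (if emb T (bar L T v) = g then 1 else 0)))"
        by (subst sum.swap) (use S in \<open>auto simp: sum_distrib_left emb_bar intro!: sum.cong\<close>)
      also have "\<dots> = 0"
      proof (rule sum.neutral, rule ballI)
        fix T assume T: "T \<in> Pow S"
        have TL: "T \<subseteq> L" using T S by auto
        have "card T \<le> card S" using T S fin by (auto intro: card_mono finite_subset)
        then have lin0: "linext (bar L T) V = (\<lambda>_. 0)" using False TL vanish by simp
        have "(\<Sum>v\<in>A. V v * (if emb T (bar L T v) = g then 1 else 0))
          = (\<Sum>u\<in>bar L T ` A. \<Sum>v\<in>{v\<in>A. bar L T v = u}. V v * (if emb T (bar L T v) = g then 1 else 0))"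
          by (rule sum.image_gen[OF A(1)])
        also have "\<dots> = (\<Sum>u\<in>bar L T ` A. (if emb T u = g then 1 else 0) * linext (bar L T) V u)"
          unfolding linext_def A_def
          by (intro sum.cong refl) (auto simp: sum_distrib_left intro!: sum.cong)
        also have "\<dots> = 0" using lin0 by simp
        finally show "(-1)^(card S - card T) * (\<Sum>v\<in>A. V v * (if emb T (bar L T v) = g then 1 else 0)) = 0"
          by simp
      qed
      finally show ?thesis .
    qed
    then have "FS S = (\<lambda>_. 0)" by auto
    then show ?thesis using aug_pow_zero by simp
  qed
  then show ?thesis unfolding x_eq using fin by (intro aug_pow_sum) auto
qed

end


theorem mainTheorem6:
  fixes L :: "'v list set" and G :: "nat \<Rightarrow> 'g monoid"
    and d s :: "nat \<Rightarrow> nat \<Rightarrow> 'g \<Rightarrow> 'g"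
    and V :: "(nat \<Rightarrow> 'v list \<Rightarrow> 'g) \<Rightarrow> int"
  assumes "polyhedron L"
    and "simplicial_group G d s"
    and "V \<in> free_ab (smaps L (\<lambda>n. carrier (G n)) d s)"
  shows "theta L V \<le> eta L G d s V"
proof -
  interpret sctx L G d s using assms(1,2) by unfold_locales
  have key: "linext (bar L L) V \<in> aug_pow (GL L G d s) k" if k: "enat k \<le> theta L V" for k
  proof (rule main[OF assms(3)])
    fix T assume T: "T \<subseteq> L" "card T < k"
    show "linext (bar L T) V = (\<lambda>_. 0)"
    proof (rule ccontr)
      assume "linext (bar L T) V \<noteq> (\<lambda>_. 0)"
      then have "theta L V \<le> enat (card T)" unfolding theta_def using T by (auto intro: Inf_lower)
      with k T show False by (meson enat_ord_simps(2) le_less_trans order.strict_iff_not)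
    qed
  qed
  show ?thesis
  proof (cases "theta L V")
    case (enat m)
    then have "m \<in> {k. linext (bar L L) V \<in> aug_pow (GL L G d s) k}" using key by simp
    then show ?thesis unfolding eta_def enat by (auto intro: Sup_upper)
  next
    case infinity
    then have all: "{k. linext (bar L L) V \<in> aug_pow (GL L G d s) k} = UNIV" using key by auto
    have "\<infinity> \<le> Sup (enat ` (UNIV :: nat set))"
    proof (rule ccontr)
      assume "\<not> \<infinity> \<le> Sup (enat ` (UNIV :: nat set))"
      then obtain m where m: "Sup (enat ` (UNIV :: nat set)) = enat m"
        by (cases "Sup (enat ` (UNIV :: nat set))") auto
      have "enat (Suc m) \<le> Sup (enat ` (UNIV :: nat set))" by (rule Sup_upper) simp
      then show False using m by simp
    qed
    then show ?thesis unfolding eta_def all infinity .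
  qed
qed

end
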